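(* Let $A$ and $B$ be nontrivial commutative groups. Then $\delta(A,B)=\nu(\mathbb{Z}_{e(B)}[A])-1$ (with the convention $\infty-1=\infty$). In particular, $\delta(A,B)<\infty$ if and only if the augmentation ideal of $\mathbb{Z}_{e(B)}[A]$ is nilpotent, and $\delta(A,B)$ depends only on $A$ and $\exp(B)$.
   Context: For commutative groups $A,B$, $B^A$ denotes the commutative group (under pointwise addition) of all maps $A\to B$. For $a\in A$, the difference operator $\Delta_a:B^A\to B^A$ is $(\Delta_a f)(x)=f(x+a)-f(x)$. Let $\widetilde{\mathbb N}=\mathbb N\cup\{-\infty,\infty\}$ ($\mathbb N=\{0,1,2,\dots\}$), totally ordered with $-\infty$ least and $\infty$ greatest. The functional degree $\operatorname{fdeg}(f)\in\widetilde{\mathbb N}$ of $f\in B^A$ is: $-\infty$ if $f=0$; otherwise the least $n\in\mathbb N$ such that $\Delta_{a_1}\cdots\Delta_{a_{n+1}}f=0$ for all $a_1,\dots,a_{n+1}\in A$; and $\infty$ if no such $n$ exists. Define $\delta(A,B)=\sup\{\operatorname{fdeg}(f): f\in B^A\}$. $\mathbb{Z}_n=\mathbb{Z}/n\mathbb{Z}$ (so $\mathbb{Z}_0=\mathbb{Z}$). $\exp(B)$ is the least $n\ge1$ with $nB=0$, or $\infty$; $e(B)=\exp(B)$ if finite and $e(B)=0$ otherwise. For a commutative ring $R$ and commutative group $A$, the augmentation ideal $I$ of the group ring $R[A]$ is the kernel of $\sum r_a[a]\mapsto\sum r_a$, and $\nu(R[A])$ is the least $n\in\mathbb N$ with $I^n=0$,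 or $\infty$ if none exists. *)

theory Defs
  imports Main "HOL-Library.Poly_Mapping" "HOL-Library.Extended_Nat" "HOL-Library.Option_ord"
begin

text \<open>Extended naturals N-tilde = N + {-infinity, infinity} are modelled as enat option:
  None = -infinity, Some (enat n) = n, Some infinity = infinity (ordered by Option_ord).\<close>

definition diff_op :: "'a::ab_group_add \<Rightarrow> ('a \<Rightarrow> 'b::ab_group_add) \<Rightarrow> ('a \<Rightarrow> 'b)" where
  "diff_op a f = (\<lambda>x. f (x + a) - f x)"

definition iter_diff :: "'a::ab_group_add list \<Rightarrow> ('a \<Rightarrow> 'b::ab_group_add) \<Rightarrow> ('a \<Rightarrow> 'b)" where
  "iter_diff as f = foldr diff_op as f"

definition kills :: "nat \<Rightarrow> ('a::ab_group_add \<Rightarrow> 'b::ab_group_add) \<Rightarrow> bool" where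
  "kills n f \<longleftrightarrow> (\<forall>as. length as = Suc n \<longrightarrow> iter_diff as f = (\<lambda>_. 0))"

definition fdeg :: "('a::ab_group_add \<Rightarrow> 'b::ab_group_add) \<Rightarrow> enat option" where
  "fdeg f = (if f = (\<lambda>_. 0) then None
             else if \<exists>n. kills n f then Some (enat (LEAST n. kills n f))
             else Some \<infinity>)"

definition delta :: "'a::ab_group_add itself \<Rightarrow> 'b::ab_group_add itself \<Rightarrow> enat option" where
  "delta _ _ = (SUP f \<in> (UNIV :: ('a \<Rightarrow> 'b) set). fdeg f)"

definition nsum :: "nat \<Rightarrow> 'b::ab_group_add \<Rightarrow> 'b" where
  "nsum n b = (\<Sum>i<n. b)"

definition e_grp :: "'b::ab_group_add itself \<Rightarrow> nat" where
  "e_grp _ = (if \<exists>n\<ge>1. \<forall>b::'b. nsum n b = 0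
              then (LEAST n. n \<ge> 1 \<and> (\<forall>b::'b. nsum n b = 0)) else 0)"

text \<open>Group ring R[A] = finitely supported functions A to R (type a \<Rightarrow>0 r) with convolution product.\<close>
definition augmentation :: "('a \<Rightarrow>\<^sub>0 'r::comm_ring_1) \<Rightarrow> 'r" where
  "augmentation x = (\<Sum>a\<in>Poly_Mapping.keys x. Poly_Mapping.lookup x a)"

definition aug_ideal :: "('a::comm_monoid_add \<Rightarrow>\<^sub>0 'r::comm_ring_1) set" where
  "aug_ideal = {x. augmentation x = 0}"

definition ideal_prod :: "'r::comm_ring_1 set \<Rightarrow> 'r set \<Rightarrow> 'r set" where
  "ideal_prod I J = {x. \<exists>ps. (\<forall>p\<in>set ps. fst p \<in> I \<and> snd p \<in> J) \<and> x = (\<Sum>p\<leftarrow>ps. fst p * snd p)}"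

fun ideal_pow :: "'r::comm_ring_1 set \<Rightarrow> nat \<Rightarrow> 'r set" where
  "ideal_pow I 0 = UNIV"
| "ideal_pow I (Suc n) = ideal_prod I (ideal_pow I n)"

definition nu :: "'a::comm_monoid_add itself \<Rightarrow> 'r::comm_ring_1 itself \<Rightarrow> enat" where
  "nu _ _ = (if \<exists>n. ideal_pow (aug_ideal :: ('a \<Rightarrow>\<^sub>0 'r) set) n = {0}
             then enat (LEAST n. ideal_pow (aug_ideal :: ('a \<Rightarrow>\<^sub>0 'r) set) n = {0}) else \<infinity>)"

text \<open>'r is (isomorphic to) Z_m: the canonical map Z \<rightarrow> 'r is surjective with kernel mZ.\<close>
definition is_Zmod :: "'r::comm_ring_1 itself \<Rightarrow> nat \<Rightarrow> bool" where
  "is_Zmod _ m \<longleftrightarrow> surj (of_int :: int \<Rightarrow> 'r) \<and> (\<forall>k. (of_int k = (0::'r)) \<longleftrightarrow> int m dvd k)"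

end

theory Submission
  imports Defs
begin


definition zmul :: "int \<Rightarrow> 'b::ab_group_add \<Rightarrow> 'b" where
  "zmul k b = nsum (nat k) b - nsum (nat (-k)) b"

lemma nsum_0[simp]: "nsum 0 b = 0" by (simp add: nsum_def)
lemma nsum_Suc[simp]: "nsum (Suc n) b = nsum n b + b" by (simp add: nsum_def)
lemma nsum_add: "nsum (m+n) b = nsum m b + nsum n b"
  by (induct n) (auto simp: add.assoc)
lemma nsum_mult: "nsum (m*n) b = nsum m (nsum n b)"
  by (induct m) (auto simp: nsum_add add.commute)
lemma nsum_zero[simp]: "nsum n 0 = 0" by (induct n) auto
lemma nsum_plus: "nsum n (b+c) = nsum n b + nsum n c"
  by (induct n) (auto simp: algebra_simps)
lemma nsum_minus: "nsum n (b-c) = nsum n b - nsum n c"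
  by (induct n) (auto simp: algebra_simps)

lemma zmul_diff: "zmul (int m - int n) b = nsum m b - nsum n b"
proof (cases "n \<le> m")
  case True
  then have "nat (int m - int n) = m - n" "nat (-(int m - int n)) = 0" by auto
  moreover have "nsum m b = nsum (m-n) b + nsum n b" using True nsum_add[of "m-n" n b] by simp
  ultimately show ?thesis by (simp add: zmul_def)
next
  case False
  then have "nat (int m - int n) = 0" "nat (-(int m - int n)) = n - m" by auto
  moreover have "nsum n b = nsum (n-m) b + nsum m b" using False nsum_add[of "n-m" m b] by simp
  ultimately show ?thesis by (simp add: zmul_def)
qed

lemma int_rep: obtains m n where "k = int m - int n"
  using that[of "nat k" "nat (-k)"] by auto

lemma zmul_add: "zmul (k+l) b = zmul k b + zmul l b"
proof -
  obtain m1 n1 where k: "k = int m1 - int n1" by (rule int_rep)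
  obtain m2 n2 where l: "l = int m2 - int n2" by (rule int_rep)
  have "k + l = int (m1+m2) - int (n1+n2)" using k l by simp
  then show ?thesis using k l by (simp only: zmul_diff nsum_add) (simp add: algebra_simps)
qed

lemma zmul_diff_left: "zmul (k-l) b = zmul k b - zmul l b"
  using zmul_add[of "k-l" l b] by (simp add: algebra_simps)

lemma zmul_zero_right[simp]: "zmul k 0 = 0" by (simp add: zmul_def)
lemma zmul_zero_left[simp]: "zmul 0 b = 0" by (simp add: zmul_def)

lemma zmul_eunit: "zmul (int e * t) b = zmul t (nsum e b)"
proof -
  obtain m n where t: "t = int m - int n" by (rule int_rep)
  have "int e * t = int (m*e) - int (n*e)" unfolding t by (simp add: algebra_simps)
  then show ?thesis using t by (simp only: zmul_diff nsum_mult)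
qed

lemma e_kills: "nsum (e_grp TYPE('b)) (b::'b::ab_group_add) = 0"
proof (cases "\<exists>n\<ge>1. \<forall>b::'b. nsum n b = 0")
  case True
  then have "e_grp TYPE('b) = (LEAST n. n \<ge> 1 \<and> (\<forall>b::'b. nsum n b = 0))" by (simp add: e_grp_def)
  moreover have "(LEAST n. n \<ge> 1 \<and> (\<forall>b::'b. nsum n b = 0)) \<ge> 1 \<and> (\<forall>b::'b. nsum (LEAST n. n \<ge> 1 \<and> (\<forall>b::'b. nsum n b = 0)) b = 0)"
    using True by (rule LeastI_ex)
  ultimately show ?thesis by simp
next
  case False
  show ?thesis by (simp only: e_grp_def if_not_P[OF False] nsum_0)
qed

lemma e_mult_kills: "int (e_grp TYPE('b)) dvd k \<Longrightarrow> zmul k (b::'b::ab_group_add) = 0"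
  by (auto simp: zmul_eunit e_kills)

lemma e_dvd:
  assumes "\<forall>b::'b::ab_group_add. zmul k b = 0"
  shows "int (e_grp TYPE('b)) dvd k"
proof (cases "k = 0")
  case True then show ?thesis by simp
next
  case False
  define n where "n = nat \<bar>k\<bar>"
  have n1: "n \<ge> 1" using False by (simp add: n_def)
  have kill: "\<forall>b::'b. nsum n b = 0"
  proof
    fix b :: 'b
    show "nsum n b = 0"
    proof (cases "k \<ge> 0")
      case True then show ?thesis using assms[rule_format, of b] by (simp add: zmul_def n_def)
    next
      case False then show ?thesis using assms[rule_format, of b] by (simp add: zmul_def n_def)
    qed
  qed
  have ex: "\<exists>n\<ge>1. \<forall>b::'b. nsum n b = 0" using n1 kill by blast
  define e where "e = e_grp TYPE('b)"
  have eL: "e = (LEAST n. n \<ge> 1 \<and> (\<forall>b::'b. nsum n b = 0))" using ex by (simp add: e_grp_def e_def)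
  have e1: "e \<ge> 1" using LeastI_ex[OF ex] eL by simp
  have ek: "\<forall>b::'b. nsum e b = 0" using e_kills e_def by blast
  have mk: "\<forall>b::'b. nsum (n mod e) b = 0"
  proof
    fix b :: 'b
    have "nsum n b = nsum (n mod e) b + nsum ((n div e) * e) b"
      using nsum_add[of "n mod e" "(n div e) * e" b] by simp
    then show "nsum (n mod e) b = 0" using kill ek by (simp add: nsum_mult)
  qed
  have "n mod e = 0"
  proof (rule ccontr)
    assume h: "n mod e \<noteq> 0"
    have "(LEAST n. n \<ge> 1 \<and> (\<forall>b::'b. nsum n b = 0)) \<le> n mod e" using mk h by (intro Least_le) auto
    then have "e \<le> n mod e" using eL by simp
    moreover have "n mod e < e" using e1 by simp
    ultimately show False by simp
  qed
  then have "e dvd n" by auto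
  then have "int e dvd int n" by simp
  then show ?thesis unfolding e_def n_def by simp
qed



fun cf :: "'a::ab_group_add list \<Rightarrow> 'a \<Rightarrow> int" where
  "cf [] y = (if y = 0 then 1 else 0)"
| "cf (a#as) y = cf as (y - a) - cf as y"

fun sp :: "'a::ab_group_add list \<Rightarrow> 'a set" where
  "sp [] = {0}"
| "sp (a#as) = sp as \<union> (\<lambda>y. y + a) ` sp as"

lemma finite_sp[simp]: "finite (sp as)"
  by (induct as) auto

lemma cf_out: "y \<notin> sp as \<Longrightarrow> cf as y = 0"
proof (induct as arbitrary: y)
  case Nil then show ?case by auto
next
  case (Cons a as)
  then have "y \<notin> sp as" "y - a \<notin> sp as"
    by (auto simp: image_iff)
  then show ?case using Cons by simp
qed

lemma iter_diff_Nil[simp]: "iter_diff [] f = f" by (simp add: iter_diff_def)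
lemma iter_diff_Cons[simp]: "iter_diff (a#as) f = diff_op a (iter_diff as f)"
  by (simp add: iter_diff_def)

lemma iter_diff_formula:
  "iter_diff as f x = (\<Sum>y\<in>sp as. zmul (cf as y) (f (x + y)))"
proof (induct as arbitrary: x)
  case Nil then show ?case by (simp add: zmul_def)
next
  case (Cons a as)
  let ?S = "sp as" and ?T = "(\<lambda>y. y + a) ` sp as"
  have L: "iter_diff (a#as) f x = iter_diff as f (x+a) - iter_diff as f x"
    by (simp add: diff_op_def)
  have R: "(\<Sum>y\<in>sp (a#as). zmul (cf (a#as) y) (f (x + y))) =
     (\<Sum>y\<in>?S \<union> ?T. zmul (cf as (y - a)) (f (x + y))) - (\<Sum>y\<in>?S \<union> ?T. zmul (cf as y) (f (x + y)))"
    by (simp add: zmul_diff_left sum_subtractf)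
  have 1: "(\<Sum>y\<in>?S \<union> ?T. zmul (cf as y) (f (x + y))) = (\<Sum>y\<in>?S. zmul (cf as y) (f (x + y)))"
    by (rule sum.mono_neutral_right) (auto simp: cf_out)
  have 2: "(\<Sum>y\<in>?S \<union> ?T. zmul (cf as (y - a)) (f (x + y))) = (\<Sum>y\<in>?T. zmul (cf as (y - a)) (f (x + y)))"
  proof (rule sum.mono_neutral_right)
    show "\<forall>i\<in>?S \<union> ?T - ?T. zmul (cf as (i - a)) (f (x + i)) = 0"
    proof
      fix i assume "i \<in> ?S \<union> ?T - ?T"
      then have "i - a \<notin> sp as" by (auto simp: image_iff)
      then show "zmul (cf as (i - a)) (f (x + i)) = 0" by (simp add: cf_out)
    qed
  qed auto
  have 3: "(\<Sum>y\<in>?T. zmul (cf as (y - a)) (f (x + y))) = (\<Sum>z\<in>?S. zmul (cf as z) (f (x + a + z)))"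
    by (subst sum.reindex) (auto simp: inj_on_def algebra_simps)
  show ?case using L R 1 2 3 Cons by simp
qed

lemma iter_diff_zero: "iter_diff as (\<lambda>_. 0::'b::ab_group_add) = (\<lambda>_. 0)"
  by (induct as) (auto simp: diff_op_def)

lemma B_char:
  "(\<forall>f::'a::ab_group_add \<Rightarrow> 'b::ab_group_add. iter_diff as f = (\<lambda>_. 0))
     \<longleftrightarrow> (\<forall>y. int (e_grp TYPE('b)) dvd cf as y)"
proof
  assume h: "\<forall>y. int (e_grp TYPE('b)) dvd cf as y"
  show "\<forall>f::'a \<Rightarrow> 'b. iter_diff as f = (\<lambda>_. 0)"
  proof (intro allI ext)
    fix f :: "'a \<Rightarrow> 'b" and x
    show "iter_diff as f x = 0" unfolding iter_diff_formula
      using h by (simp add: e_mult_kills)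
  qed
next
  assume h: "\<forall>f::'a \<Rightarrow> 'b. iter_diff as f = (\<lambda>_. 0)"
  show "\<forall>y. int (e_grp TYPE('b)) dvd cf as y"
  proof (rule ccontr)
    assume "\<not> (\<forall>y. int (e_grp TYPE('b)) dvd cf as y)"
    then obtain y0 where y0: "\<not> int (e_grp TYPE('b)) dvd cf as y0" by blast
    then obtain b :: 'b where b: "zmul (cf as y0) b \<noteq> 0" using e_dvd by blast
    have "cf as y0 \<noteq> 0" using y0 by auto
    then have ys: "y0 \<in> sp as" using cf_out by blast
    define f where "f = (\<lambda>z. if z = y0 then b else (0::'b))"
    have "iter_diff as f 0 = (\<Sum>y\<in>sp as. (if y = y0 then zmul (cf as y0) b else 0))"
      unfolding iter_diff_formula f_def by (intro sum.cong) auto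
    also have "\<dots> = zmul (cf as y0) b" using ys by simp
    finally show False using h b by (metis)
  qed
qed



fun pR :: "'a::ab_group_add list \<Rightarrow> ('a \<Rightarrow>\<^sub>0 'r::comm_ring_1)" where
  "pR [] = 1"
| "pR (a#as) = (Poly_Mapping.single a 1 - 1) * pR as"

lemma lookup_shift:
  "Poly_Mapping.lookup (Poly_Mapping.single a (1::'r::comm_ring_1) * g) y = Poly_Mapping.lookup g (y - (a::'a::ab_group_add))"
proof -
  have "Poly_Mapping.lookup (Poly_Mapping.single a (1::'r) * g) y =
     (\<Sum>l. (1 when a = l) * (\<Sum>q. Poly_Mapping.lookup g q when y = l + q))"
    by (simp add: lookup_mult lookup_single)
  also have "\<dots> = (\<Sum>q. Poly_Mapping.lookup g q when y = a + q)"
    by (simp add: when_mult)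
  also have "\<dots> = (\<Sum>q. Poly_Mapping.lookup g q when q = y - a)"
    by (rule Sum_any.cong) (auto simp: when_def algebra_simps)
  also have "\<dots> = Poly_Mapping.lookup g (y - a)" by simp
  finally show ?thesis .
qed

lemma one_pm: "(1::'a::ab_group_add \<Rightarrow>\<^sub>0 'r::comm_ring_1) = Poly_Mapping.single 0 1"
  by (rule poly_mapping_eqI) (simp add: lookup_one lookup_single when_def)

lemma lookup_pR: "Poly_Mapping.lookup (pR as :: 'a::ab_group_add \<Rightarrow>\<^sub>0 'r::comm_ring_1) y = of_int (cf as y)"
proof (induct as arbitrary: y)
  case Nil then show ?case by (simp add: lookup_one when_def)
next
  case (Cons a as)
  have "(Poly_Mapping.single a 1 - 1) * (pR as :: 'a \<Rightarrow>\<^sub>0 'r) = Poly_Mapping.single a 1 * pR as - pR as"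
    by (simp add: left_diff_distrib)
  then show ?case using Cons by (simp add: lookup_minus lookup_shift)
qed



inductive_set Spn :: "nat \<Rightarrow> ('a::ab_group_add \<Rightarrow>\<^sub>0 'r::comm_ring_1) set" for n where
  Spn0: "0 \<in> Spn n"
| SpnS: "length (as::'a list) = n \<Longrightarrow> z \<in> Spn n \<Longrightarrow> r * pR as + z \<in> Spn n"

lemma Spn_add: "x \<in> Spn n \<Longrightarrow> y \<in> Spn n \<Longrightarrow> x + y \<in> Spn n"
proof (induct x rule: Spn.induct)
  case Spn0 then show ?case by simp
next
  case (SpnS as z r)
  have "r * pR as + z + y = r * pR as + (z + y)" by (simp only: add.assoc)
  moreover have "r * pR as + (z + y) \<in> Spn n" using SpnS by (intro Spn.SpnS) auto
  ultimately show ?case by (simp only:)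
qed

lemma Spn_single_mult:
  "y \<in> Spn n \<Longrightarrow> r * pR [a] * y \<in> Spn (Suc n)"
proof (induct y rule: Spn.induct)
  case Spn0 then show ?case by (simp add: Spn.intros)
next
  case (SpnS as z r')
  have "r * pR [a] * (r' * pR as + z) = (r * r') * pR (a#as) + r * pR [a] * z"
    by (simp add: algebra_simps)
  moreover have "(r * r') * pR (a#as) + r * pR [a] * z \<in> Spn (Suc n)"
    using SpnS by (intro Spn.SpnS) auto
  ultimately show ?case by (simp only:)
qed

lemma Spn1_mult: "x \<in> Spn 1 \<Longrightarrow> y \<in> Spn n \<Longrightarrow> x * y \<in> Spn (Suc n)"
proof (induct x rule: Spn.induct)
  case Spn0 then show ?case by (simp add: Spn.intros)
next
  case (SpnS as z r)
  then obtain a where "as = [a]" by (cases as) auto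
  then have "(r * pR as + z) * y = r * pR [a] * y + z * y" by (simp only: distrib_right)
  moreover have "r * pR [a] * y + z * y \<in> Spn (Suc n)"
    using SpnS Spn_single_mult[OF SpnS(4), of r a] by (intro Spn_add) auto
  ultimately show ?case by (simp only:)
qed

lemma augmentation_sum:
  assumes "finite K" "Poly_Mapping.keys x \<subseteq> K"
  shows "augmentation x = (\<Sum>a\<in>K. Poly_Mapping.lookup x a)"
  unfolding augmentation_def using assms
  by (intro sum.mono_neutral_left) (auto simp: in_keys_iff)

lemma aug_Spn1:
  assumes "(x::'a::ab_group_add \<Rightarrow>\<^sub>0 'r::comm_ring_1) \<in> aug_ideal"
  shows "x \<in> Spn 1"
proof -
  let ?K = "Poly_Mapping.keys x"
  let ?c = "\<lambda>a. Poly_Mapping.lookup x a"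
  have aug0: "(\<Sum>a\<in>?K. ?c a) = 0" using assms by (simp add: aug_ideal_def augmentation_def)
  have eq: "x = (\<Sum>a\<in>?K. Poly_Mapping.single 0 (?c a) * pR [a])"
  proof (rule poly_mapping_eqI)
    fix y
    have "Poly_Mapping.lookup (\<Sum>a\<in>?K. Poly_Mapping.single 0 (?c a) * pR [a]) y
       = (\<Sum>a\<in>?K. (?c a when a = y) - (?c a when 0 = y))"
      by (simp add: lookup_sum algebra_simps mult_single lookup_minus lookup_single)
    also have "\<dots> = (\<Sum>a\<in>?K. (?c a when a = y)) - (\<Sum>a\<in>?K. (?c a when 0 = y))"
      by (simp add: sum_subtractf)
    also have "(\<Sum>a\<in>?K. (?c a when 0 = y)) = 0"
      using aug0 by (cases "y = 0") (auto simp: when_def)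
    also have "(\<Sum>a\<in>?K. (?c a when a = y)) = ?c y"
      by (cases "y \<in> ?K") (auto simp: when_def in_keys_iff)
    finally show "Poly_Mapping.lookup x y = Poly_Mapping.lookup (\<Sum>a\<in>?K. Poly_Mapping.single 0 (?c a) * pR [a]) y"
      by simp
  qed
  have "finite K \<Longrightarrow> (\<Sum>a\<in>K. g a * pR [a]) \<in> Spn 1" for K and g :: "'a \<Rightarrow> ('a \<Rightarrow>\<^sub>0 'r)"
  proof (induct K rule: finite_induct)
    case empty then show ?case by (simp add: Spn.Spn0)
  next
    case (insert x F)
    then have "g x * pR [x] + (\<Sum>a\<in>F. g a * pR [a]) \<in> Spn 1" by (intro Spn.SpnS) auto
    moreover have "(\<Sum>a\<in>insert x F. g a * pR [a]) = g x * pR [x] + (\<Sum>a\<in>F. g a * pR [a])"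
      using insert(1,2) by (rule sum.insert)
    ultimately show ?case by (simp only:)
  qed
  then show ?thesis using eq by (metis finite_keys)
qed

lemma ideal_pow_Spn: "ideal_pow (aug_ideal :: ('a::ab_group_add \<Rightarrow>\<^sub>0 'r::comm_ring_1) set) n \<subseteq> Spn n"
proof (induct n)
  case 0
  show ?case
  proof
    fix z :: "'a \<Rightarrow>\<^sub>0 'r"
    have "z * pR [] + 0 \<in> Spn 0" by (intro Spn.intros) auto
    then show "z \<in> Spn 0" by simp
  qed
next
  case (Suc n)
  show ?case
  proof
    fix z assume "z \<in> ideal_pow (aug_ideal :: ('a \<Rightarrow>\<^sub>0 'r) set) (Suc n)"
    then obtain ps where ps: "\<forall>p\<in>set ps. fst p \<in> aug_ideal \<and> snd p \<in> ideal_pow aug_ideal n"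
        "z = (\<Sum>p\<leftarrow>ps. fst p * snd p)" by (auto simp: ideal_prod_def)
    have "(\<forall>p\<in>set ps. fst p \<in> (aug_ideal :: ('a \<Rightarrow>\<^sub>0 'r) set) \<and> snd p \<in> ideal_pow aug_ideal n)
       \<Longrightarrow> (\<Sum>p\<leftarrow>ps. fst p * snd p) \<in> Spn (Suc n)"
    proof (induct ps)
      case Nil then show ?case by (simp add: Spn.intros)
    next
      case (Cons p ps)
      then show ?case using Suc aug_Spn1 by (auto intro!: Spn_add Spn1_mult)
    qed
    then show "z \<in> Spn (Suc n)" using ps by simp
  qed
qed

lemma Spn_zero: "(\<forall>as::'a list. length as = n \<longrightarrow> (pR as :: 'a::ab_group_add \<Rightarrow>\<^sub>0 'r::comm_ring_1) = 0)
   \<Longrightarrow> z \<in> Spn n \<Longrightarrow> (z :: 'a \<Rightarrow>\<^sub>0 'r) = 0"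
  by (erule Spn.induct) auto

lemma aug_gen: "Poly_Mapping.single a 1 - 1 \<in> (aug_ideal :: ('a::ab_group_add \<Rightarrow>\<^sub>0 'r::comm_ring_1) set)"
proof -
  let ?x = "Poly_Mapping.single a 1 - 1 :: 'a \<Rightarrow>\<^sub>0 'r"
  have "Poly_Mapping.keys ?x \<subseteq> {a, 0}"
    by (auto simp: in_keys_iff lookup_minus lookup_one lookup_single when_def split: if_splits)
  then have "augmentation ?x = (\<Sum>b\<in>{a,0}. Poly_Mapping.lookup ?x b)"
    by (intro augmentation_sum) auto
  also have "\<dots> = 0"
    by (cases "a = 0") (auto simp: lookup_minus lookup_one lookup_single when_def)
  finally show ?thesis by (simp add: aug_ideal_def)
qed

lemma pR_in: "(pR as :: 'a::ab_group_add \<Rightarrow>\<^sub>0 'r::comm_ring_1) \<in> ideal_pow aug_ideal (length as)"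
proof (induct as)
  case Nil then show ?case by simp
next
  case (Cons a as)
  show ?case unfolding ideal_pow.simps length_Cons ideal_prod_def
    by (rule CollectI, rule exI[of _ "[(Poly_Mapping.single a 1 - 1, pR as)]"]) (simp add: aug_gen Cons)
qed

lemma zero_in: "0 \<in> ideal_pow (aug_ideal :: ('a::ab_group_add \<Rightarrow>\<^sub>0 'r::comm_ring_1) set) n"
proof (cases n)
  case 0 then show ?thesis by simp
next
  case (Suc m)
  show ?thesis unfolding Suc ideal_pow.simps(2) ideal_prod_def
    by (rule CollectI, rule exI[of _ "[]"]) simp
qed

lemma ideal_char:
  "ideal_pow (aug_ideal :: ('a::ab_group_add \<Rightarrow>\<^sub>0 'r::comm_ring_1) set) n = {0}
   \<longleftrightarrow> (\<forall>as::'a list. length as = n \<longrightarrow> (pR as :: 'a \<Rightarrow>\<^sub>0 'r) = 0)"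
proof
  assume H: "ideal_pow (aug_ideal :: ('a \<Rightarrow>\<^sub>0 'r) set) n = {0}"
  show "\<forall>as::'a list. length as = n \<longrightarrow> (pR as :: 'a \<Rightarrow>\<^sub>0 'r) = 0"
  proof (intro allI impI)
    fix as :: "'a list" assume l: "length as = n"
    have "(pR as :: 'a \<Rightarrow>\<^sub>0 'r) \<in> ideal_pow aug_ideal n" using pR_in[of as] l by simp
    then show "(pR as :: 'a \<Rightarrow>\<^sub>0 'r) = 0" using H by simp
  qed
next
  assume h: "\<forall>as::'a list. length as = n \<longrightarrow> (pR as :: 'a \<Rightarrow>\<^sub>0 'r) = 0"
  show "ideal_pow (aug_ideal :: ('a \<Rightarrow>\<^sub>0 'r) set) n = {0}"
  proof (rule set_eqI)
    fix z :: "'a \<Rightarrow>\<^sub>0 'r"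
    show "z \<in> ideal_pow aug_ideal n \<longleftrightarrow> z \<in> {0}"
    proof
      assume "z \<in> ideal_pow aug_ideal n"
      then have "z \<in> Spn n" using ideal_pow_Spn by (rule subsetD[rotated])
      then show "z \<in> {0}" using Spn_zero[OF h] by simp
    next
      assume "z \<in> {0}"
      then show "z \<in> ideal_pow aug_ideal n" using zero_in by simp
    qed
  qed
qed



lemma kills_Suc: "kills n f \<Longrightarrow> kills (Suc n) f"
  unfolding kills_def
proof (intro allI impI)
  fix as :: "'a list"
  assume h: "\<forall>as. length as = Suc n \<longrightarrow> iter_diff as f = (\<lambda>_. 0)" and l: "length as = Suc (Suc n)"
  then obtain a as' where "as = a#as'" "length as' = Suc n" by (cases as) auto
  then show "iter_diff as f = (\<lambda>_. 0)" using h by (auto simp: diff_op_def)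
qed

lemma kills_mono: "n \<le> m \<Longrightarrow> kills n f \<Longrightarrow> kills m f"
  by (induct m rule: dec_induct) (auto intro: kills_Suc)

lemma fdeg_le: "kills m f \<Longrightarrow> fdeg f \<le> Some (enat m)"
  unfolding fdeg_def by (auto intro: Least_le)

lemma fdeg_nz: "f \<noteq> (\<lambda>_. 0) \<Longrightarrow> Some (enat 0) \<le> fdeg f"
  unfolding fdeg_def by (auto simp: zero_enat_def[symmetric])

lemma fdeg_ge:
  assumes "\<not> kills m (f::'a::ab_group_add \<Rightarrow> 'b::ab_group_add)"
  shows "Some (enat (Suc m)) \<le> fdeg f"
proof -
  have nz: "f \<noteq> (\<lambda>_. 0)"
  proof
    assume "f = (\<lambda>_. 0)"
    then have "kills m f" by (simp add: kills_def iter_diff_zero)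
    then show False using assms by simp
  qed
  show ?thesis
  proof (cases "\<exists>n. kills n f")
    case True
    have "Suc m \<le> (LEAST n. kills n f)"
    proof (rule ccontr)
      assume "\<not> Suc m \<le> (LEAST n. kills n f)"
      then have "(LEAST n. kills n f) \<le> m" by simp
      moreover have "kills (LEAST n. kills n f) f" using True by (rule LeastI_ex)
      ultimately have "kills m f" by (rule kills_mono)
      then show False using assms by simp
    qed
    then show ?thesis using True nz by (simp add: fdeg_def)
  next
    case False
    then show ?thesis using nz by (simp add: fdeg_def)
  qed
qed

lemma delta_K:
  fixes y0 :: "'b::ab_group_add"
  assumes y0: "y0 \<noteq> 0"
  defines "K \<equiv> \<lambda>n. \<forall>(as::'a::ab_group_add list) (f::'a \<Rightarrow> 'b). length as = n \<longrightarrow> iter_diff as f = (\<lambda>_. 0)"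
  shows "delta TYPE('a) TYPE('b) = Some ((if \<exists>n. K n then enat (LEAST n. K n) else \<infinity>) - 1)"
proof -
  have killsK: "K (Suc m) \<longleftrightarrow> (\<forall>f::'a\<Rightarrow>'b. kills m f)" for m by (auto simp: K_def kills_def)
  have K0: "\<not> K 0"
  proof
    assume "K 0"
    then have "iter_diff [] (\<lambda>_::'a. y0) = (\<lambda>_. 0)" unfolding K_def by blast
    then show False using y0 by (simp add: fun_eq_iff)
  qed
  have nz: "(\<lambda>_::'a. y0) \<noteq> (\<lambda>_. 0)" using y0 by (simp add: fun_eq_iff)
  have base: "Some (enat 0) \<le> (SUP f\<in>(UNIV::('a\<Rightarrow>'b) set). fdeg f)"
    by (rule SUP_upper2[of "\<lambda>_. y0"]) (auto intro: fdeg_nz[OF nz])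
  show ?thesis
  proof (cases "\<exists>n. K n")
    case True
    define L where "L = (LEAST n. K n)"
    have KL: "K L" unfolding L_def using True by (rule LeastI_ex)
    have "L \<noteq> 0"
    proof
      assume "L = 0"
      with KL K0 show False by simp
    qed
    then obtain m where m: "L = Suc m" by (cases L) auto
    have "(SUP f\<in>(UNIV::('a\<Rightarrow>'b) set). fdeg f) = Some (enat m)"
    proof (rule antisym)
      show "(SUP f\<in>(UNIV::('a\<Rightarrow>'b) set). fdeg f) \<le> Some (enat m)"
        using KL m killsK by (auto intro!: SUP_least fdeg_le)
    next
      show "Some (enat m) \<le> (SUP f\<in>(UNIV::('a\<Rightarrow>'b) set). fdeg f)"
      proof (cases m)
        case 0 then show ?thesis using base by simp
      next
        case (Suc m')
        have "\<not> K (Suc m')" unfolding L_def[symmetric] using Suc m L_def by (metis lessI not_less_Least)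
        then obtain f :: "'a\<Rightarrow>'b" where "\<not> kills m' f" using killsK by blast
        then have "Some (enat m) \<le> fdeg f" using Suc fdeg_ge by blast
        then show ?thesis by (metis SUP_upper2 UNIV_I)
      qed
    qed
    moreover have "enat L - 1 = enat m" using m by (simp add: one_enat_def)
    ultimately show ?thesis using True by (simp add: delta_def L_def)
  next
    case False
    have ge: "Some (enat n) \<le> (SUP f\<in>(UNIV::('a\<Rightarrow>'b) set). fdeg f)" for n
    proof -
      have "\<not> K (Suc n)" using False by blast
      then obtain f :: "'a\<Rightarrow>'b" where "\<not> kills n f" using killsK by blast
      then have "Some (enat (Suc n)) \<le> fdeg f" by (rule fdeg_ge)
      then have "Some (enat n) \<le> fdeg f" by (rule order_trans[rotated]) simp
      then show ?thesis by (metis SUP_upper2 UNIV_I)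
    qed
    obtain s where s: "(SUP f\<in>(UNIV::('a\<Rightarrow>'b) set). fdeg f) = Some s"
      using base by (cases "(SUP f\<in>(UNIV::('a\<Rightarrow>'b) set). fdeg f)") auto
    have "s = \<infinity>"
    proof (cases s)
      case (enat k)
      then show ?thesis using ge[of "Suc k"] s by simp
    qed simp
    then show ?thesis using False s by (simp add: delta_def)
  qed
qed

definition Dp :: "'a::ab_group_add itself \<Rightarrow> nat \<Rightarrow> nat \<Rightarrow> bool" where
  "Dp _ e n \<longleftrightarrow> (\<forall>as::'a list. length as = n \<longrightarrow> (\<forall>y. int e dvd cf as y))"

lemma delta_Dp:
  assumes "\<exists>y::'b::ab_group_add. y \<noteq> 0"
  shows "delta TYPE('a::ab_group_add) TYPE('b) =
    Some ((if \<exists>n. Dp TYPE('a) (e_grp TYPE('b)) n then enat (LEAST n. Dp TYPE('a) (e_grp TYPE('b)) n) else \<infinity>) - 1)"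
proof -
  obtain y0 :: 'b where y0: "y0 \<noteq> 0" using assms by blast
  have eq: "(\<forall>(as::'a list) (f::'a \<Rightarrow> 'b). length as = n \<longrightarrow> iter_diff as f = (\<lambda>_. 0))
      = Dp TYPE('a) (e_grp TYPE('b)) n" for n
    using B_char by (auto simp: Dp_def fun_eq_iff)
  from y0 have "delta TYPE('a) TYPE('b) = Some ((if \<exists>n. \<forall>(as::'a list) (f::'a \<Rightarrow> 'b). length as = n \<longrightarrow> iter_diff as f = (\<lambda>_. 0)
      then enat (LEAST n. \<forall>(as::'a list) (f::'a \<Rightarrow> 'b). length as = n \<longrightarrow> iter_diff as f = (\<lambda>_. 0)) else \<infinity>) - 1)"
    by (rule delta_K)
  then show ?thesis unfolding eq .
qed

lemma ideal_Dp:
  assumes "is_Zmod TYPE('r::comm_ring_1) e"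
  shows "ideal_pow (aug_ideal :: ('a::ab_group_add \<Rightarrow>\<^sub>0 'r) set) n = {0} \<longleftrightarrow> Dp TYPE('a) e n"
proof -
  have "(pR as :: 'a \<Rightarrow>\<^sub>0 'r) = 0 \<longleftrightarrow> (\<forall>y. int e dvd cf as y)" for as :: "'a list"
  proof -
    have "(pR as :: 'a \<Rightarrow>\<^sub>0 'r) = 0 \<longleftrightarrow> (\<forall>y. Poly_Mapping.lookup (pR as :: 'a \<Rightarrow>\<^sub>0 'r) y = 0)"
      by (simp add: poly_mapping_eq_iff fun_eq_iff)
    also have "\<dots> \<longleftrightarrow> (\<forall>y. int e dvd cf as y)"
      using assms by (simp add: lookup_pR is_Zmod_def)
    finally show ?thesis .
  qed
  then show ?thesis by (simp add: ideal_char Dp_def)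
qed

theorem theorem4p1:
  assumes "\<exists>x::'a::ab_group_add. x \<noteq> 0"
      and "\<exists>y::'b::ab_group_add. y \<noteq> 0"
      and "is_Zmod TYPE('r::comm_ring_1) (e_grp TYPE('b))"
  shows "delta TYPE('a) TYPE('b) = Some (nu TYPE('a) TYPE('r) - 1)
         \<and> (delta TYPE('a) TYPE('b) < Some \<infinity> \<longleftrightarrow>
              (\<exists>n. ideal_pow (aug_ideal :: ('a \<Rightarrow>\<^sub>0 'r) set) n = {0}))
         \<and> (((\<exists>z::'c::ab_group_add. z \<noteq> 0) \<and> e_grp TYPE('c) = e_grp TYPE('b))
              \<longrightarrow> delta TYPE('a) TYPE('c) = delta TYPE('a) TYPE('b))"
proof -
  let ?D = "Dp TYPE('a) (e_grp TYPE('b))"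
  have id: "ideal_pow (aug_ideal :: ('a \<Rightarrow>\<^sub>0 'r) set) n = {0} \<longleftrightarrow> ?D n" for n
    using ideal_Dp[OF assms(3)] by blast
  have nu: "nu TYPE('a) TYPE('r) = (if \<exists>n. ?D n then enat (LEAST n. ?D n) else \<infinity>)"
    by (simp add: nu_def id)
  have d: "delta TYPE('a) TYPE('b) = Some (nu TYPE('a) TYPE('r) - 1)"
    using delta_Dp[where 'a='a, OF assms(2)] nu by simp
  moreover have "delta TYPE('a) TYPE('b) < Some \<infinity> \<longleftrightarrow> (\<exists>n. ideal_pow (aug_ideal :: ('a \<Rightarrow>\<^sub>0 'r) set) n = {0})"
  proof -
    have "delta TYPE('a) TYPE('b) < Some \<infinity> \<longleftrightarrow> (\<exists>n. ?D n)"
      using d nu by (auto simp: one_enat_def)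
    then show ?thesis using id by simp
  qed
  moreover have "((\<exists>z::'c::ab_group_add. z \<noteq> 0) \<and> e_grp TYPE('c) = e_grp TYPE('b))
              \<longrightarrow> delta TYPE('a) TYPE('c) = delta TYPE('a) TYPE('b)"
  proof
    assume h: "(\<exists>z::'c::ab_group_add. z \<noteq> 0) \<and> e_grp TYPE('c) = e_grp TYPE('b)"
    have c: "delta TYPE('a) TYPE('c) = Some ((if \<exists>n. Dp TYPE('a) (e_grp TYPE('c)) n
       then enat (LEAST n. Dp TYPE('a) (e_grp TYPE('c)) n) else \<infinity>) - 1)"
      using h by (intro delta_Dp) blast
    show "delta TYPE('a) TYPE('c) = delta TYPE('a) TYPE('b)"
      unfolding c delta_Dp[where 'a='a, OF assms(2)] using h by auto
  qed
  ultimately show ?thesis by blast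
qed


end
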